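(* Suppose $\gamma$ is a geodesic from $(x_1,y_1)$ to $(x_2,y_2)$ with $x_2\ge x_1$. Then there exists a semi-directed, non-self-intersecting geodesic $\gamma'$ from $(x_1,y_1)$ to $(x_2,y_2)$.
   Context: Model: Let $G$ be a probability measure on $[0,\infty)$. In $\mathbb Z^2$, every vertical edge receives weight $1$ and every horizontal edge (joining $(x,y)$ and $(x+1,y)$) receives a non-negative random weight with law $G$ (independently). A path is a sequence $(z_0,z_1,\dots)$ of points of $\mathbb Z^2$ with $z_k,z_{k+1}$ joined by an edge; its passage time $T(p)$ is the sum of weights over edges $(z_k,z_{k+1})$ of $p$; $T(u,w)=\inf_pT(p)$ over paths from $u$ to $w$, and a path from $u$ to $w$ attaining the infimum is a geodesic. A path is semi-directed if $z_{k+1}-z_k\in\{(1,0),(0,1),(0,-1)\}$ for all $k$; it is non-self-intersecting if it visits no point twice. *)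

theory Defs
  imports Complex_Main
begin

type_synonym point = "int \<times> int"

text \<open>Horizontal edge weights: w x y is the weight of the edge joining (x,y) and (x+1,y).
  Vertical edges have weight 1.\<close>

definition adjacent :: "point \<Rightarrow> point \<Rightarrow> bool" where
  "adjacent u v \<longleftrightarrow>
     (fst u = fst v \<and> \<bar>snd v - snd u\<bar> = 1) \<or> (snd u = snd v \<and> \<bar>fst v - fst u\<bar> = 1)"

definition edge_weight :: "(int \<Rightarrow> int \<Rightarrow> real) \<Rightarrow> point \<Rightarrow> point \<Rightarrow> real" where
  "edge_weight w u v = (if fst u = fst v then 1 else w (min (fst u) (fst v)) (snd u))"

definition is_path :: "point list \<Rightarrow> bool" where
  "is_path p \<longleftrightarrow> p \<noteq> [] \<and> (\<forall>i. i + 1 < length p \<longrightarrow> adjacent (p ! i) (p ! (i + 1)))"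

definition path_from_to :: "point list \<Rightarrow> point \<Rightarrow> point \<Rightarrow> bool" where
  "path_from_to p u v \<longleftrightarrow> is_path p \<and> hd p = u \<and> last p = v"

definition passage_time :: "(int \<Rightarrow> int \<Rightarrow> real) \<Rightarrow> point list \<Rightarrow> real" where
  "passage_time w p = (\<Sum>i<length p - 1. edge_weight w (p ! i) (p ! (i + 1)))"

definition T :: "(int \<Rightarrow> int \<Rightarrow> real) \<Rightarrow> point \<Rightarrow> point \<Rightarrow> real" where
  "T w u v = Inf {passage_time w p | p. path_from_to p u v}"

definition geodesic :: "(int \<Rightarrow> int \<Rightarrow> real) \<Rightarrow> point list \<Rightarrow> point \<Rightarrow> point \<Rightarrow> bool" where
  "geodesic w p u v \<longleftrightarrow> path_from_to p u v \<and> passage_time w p = T w u v"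

definition semi_directed :: "point list \<Rightarrow> bool" where
  "semi_directed p \<longleftrightarrow> (\<forall>i. i + 1 < length p \<longrightarrow>
     (fst (p ! (i + 1)) - fst (p ! i), snd (p ! (i + 1)) - snd (p ! i)) \<in> {(1, 0), (0, 1), (0, -1)})"

definition non_self_intersecting :: "point list \<Rightarrow> bool" where
  "non_self_intersecting p \<longleftrightarrow> distinct p"

end

theory Submission
  imports Defs
begin

lemma is_path_Cons:
  assumes "q \<noteq> []"
  shows "is_path (u # q) \<longleftrightarrow> adjacent u (hd q) \<and> is_path q"
proof -
  have "(\<forall>i. i + 1 < length (u#q) \<longrightarrow> adjacent ((u#q) ! i) ((u#q) ! (i + 1)))
     \<longleftrightarrow> adjacent u (q ! 0) \<and> (\<forall>j. j + 1 < length q \<longrightarrow> adjacent (q ! j) (q ! (j + 1)))"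
    (is "?L \<longleftrightarrow> ?R")
  proof
    assume L: ?L
    have "adjacent u (q ! 0)" using L[rule_format, of 0] assms by simp
    moreover have "\<forall>j. j + 1 < length q \<longrightarrow> adjacent (q ! j) (q ! (j + 1))"
    proof (intro allI impI)
      fix j assume "j + 1 < length q"
      then show "adjacent (q ! j) (q ! (j + 1))" using L[rule_format, of "Suc j"] by simp
    qed
    ultimately show ?R by blast
  next
    assume R: ?R
    show ?L
    proof (intro allI impI)
      fix i assume "i + 1 < length (u#q)"
      then show "adjacent ((u#q) ! i) ((u#q) ! (i + 1))"
        using R by (cases i) auto
    qed
  qed
  then show ?thesis using assms unfolding is_path_def by (simp add: hd_conv_nth)
qed

lemma is_path_single: "is_path [u]"
  unfolding is_path_def by simp

lemma semi_directed_Cons: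
  assumes "q \<noteq> []"
  shows "semi_directed (u # q) \<longleftrightarrow>
     (fst (hd q) - fst u, snd (hd q) - snd u) \<in> {(1, 0), (0, 1), (0, -1)} \<and> semi_directed q"
proof -
  let ?S = "\<lambda>a b::point. (fst b - fst a, snd b - snd a) \<in> {(1, 0), (0, 1), (0, -1)}"
  have "(\<forall>i. i + 1 < length (u#q) \<longrightarrow> ?S ((u#q) ! i) ((u#q) ! (i + 1)))
     \<longleftrightarrow> ?S u (q ! 0) \<and> (\<forall>j. j + 1 < length q \<longrightarrow> ?S (q ! j) (q ! (j + 1)))"
    (is "?L \<longleftrightarrow> ?R")
  proof
    assume L: ?L
    have "?S u (q ! 0)" using L[rule_format, of 0] assms by simp
    moreover have "\<forall>j. j + 1 < length q \<longrightarrow> ?S (q ! j) (q ! (j + 1))"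
    proof (intro allI impI)
      fix j assume "j + 1 < length q"
      then show "?S (q ! j) (q ! (j + 1))" using L[rule_format, of "Suc j"] by simp
    qed
    ultimately show ?R by blast
  next
    assume R: ?R
    show ?L
    proof (intro allI impI)
      fix i assume "i + 1 < length (u#q)"
      then show "?S ((u#q) ! i) ((u#q) ! (i + 1))"
        using R by (cases i) auto
    qed
  qed
  then show ?thesis using assms unfolding semi_directed_def by (simp add: hd_conv_nth)
qed

lemma semi_directed_single: "semi_directed [u]"
  unfolding semi_directed_def by simp

lemma passage_time_Cons:
  assumes "q \<noteq> []"
  shows "passage_time w (u # q) = edge_weight w u (hd q) + passage_time w q"
proof -
  obtain n where n: "length q = Suc n" using assms by (cases q) auto
  have "passage_time w (u # q) = (\<Sum>i<Suc n. edge_weight w ((u#q) ! i) ((u#q) ! (i + 1)))"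
    unfolding passage_time_def using n by simp
  also have "\<dots> = edge_weight w u (q ! 0) + (\<Sum>i<n. edge_weight w (q ! i) (q ! (i + 1)))"
    by (subst sum.lessThan_Suc_shift) simp
  also have "\<dots> = edge_weight w u (hd q) + passage_time w q"
    unfolding passage_time_def using n assms by (simp add: hd_conv_nth)
  finally show ?thesis .
qed

lemma passage_time_single: "passage_time w [u] = 0"
  unfolding passage_time_def by simp

lemma edge_weight_nonneg: "(\<And>x y. w x y \<ge> 0) \<Longrightarrow> edge_weight w u v \<ge> 0"
  unfolding edge_weight_def by simp

lemma passage_time_nonneg: "(\<And>x y. w x y \<ge> 0) \<Longrightarrow> passage_time w p \<ge> 0"
  unfolding passage_time_def by (intro sum_nonneg edge_weight_nonneg) auto

fun cost :: "(int \<Rightarrow> int \<Rightarrow> real) \<Rightarrow> int \<Rightarrow> int \<Rightarrow> int list \<Rightarrow> int \<Rightarrow> real" where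
  "cost w a b [] d = of_int \<bar>d - b\<bar>"
| "cost w a b (r # rs) d = of_int \<bar>r - b\<bar> + w a r + cost w (a + 1) r rs d"

lemma cost_tri: "cost w a b rs d \<le> of_int \<bar>b - b'\<bar> + cost w a b' rs d"
  by (cases rs) auto

lemma vert_bound:
  fixes a b c d :: int
  assumes "\<And>x y. w x y \<ge> 0"
  shows "is_path p \<Longrightarrow> hd p = (a, b) \<Longrightarrow> last p = (c, d) \<Longrightarrow> of_int \<bar>d - b\<bar> \<le> passage_time w p"
proof (induction p arbitrary: a b)
  case Nil then show ?case by (simp add: is_path_def)
next
  case (Cons u p)
  show ?case
  proof (cases "p = []")
    case True then show ?thesis using Cons by (simp add: passage_time_single)
  next
    case False
    obtain a' b' where h: "hd p = (a', b')" by (cases "hd p")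
    have adj: "adjacent (a,b) (a',b')" and pp: "is_path p"
      using Cons.prems False is_path_Cons h by auto
    have IH: "of_int \<bar>d - b'\<bar> \<le> passage_time w p" using Cons.IH[OF pp h] Cons.prems False by simp
    have pt: "passage_time w (u # p) = edge_weight w (a,b) (a',b') + passage_time w p"
      using passage_time_Cons[OF False] Cons.prems h by simp
    have ew: "edge_weight w (a,b) (a',b') \<ge> 0" using edge_weight_nonneg assms by blast
    show ?thesis
    proof (cases "a = a'")
      case True
      then have "\<bar>b' - b\<bar> = 1" "edge_weight w (a,b) (a',b') = 1" using adj
        by (auto simp: adjacent_def edge_weight_def)
      then show ?thesis using pt IH by linarith
    next
      case False
      then have "b' = b" using adj by (auto simp: adjacent_def)
      then show ?thesis using pt IH ew by linarith
    qed
  qed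
qed


lemma lower:
  fixes a b c d :: int
  assumes w0: "\<And>x y. w x y \<ge> 0"
  shows "is_path p \<Longrightarrow> hd p = (a, b) \<Longrightarrow> last p = (c, d) \<Longrightarrow> a \<le> c \<Longrightarrow>
    \<exists>rs. length rs = nat (c - a) \<and> cost w a b rs d \<le> passage_time w p"
proof (induction p arbitrary: a b)
  case Nil then show ?case by (simp add: is_path_def)
next
  case (Cons u p)
  show ?case
  proof (cases "c = a")
    case True
    have "of_int \<bar>d - b\<bar> \<le> passage_time w (u # p)"
      using vert_bound[OF w0, of "u # p" a b c d] Cons.prems by simp
    then show ?thesis using True by (intro exI[of _ "[]"]) simp
  next
    case ca: False
    show ?thesis
    proof (cases "p = []")
      case True then show ?thesis using Cons ca by simp
    next
      case False
      obtain a' b' where h: "hd p = (a', b')" by (cases "hd p")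
      have adj: "adjacent (a,b) (a',b')" and pp: "is_path p"
        using Cons.prems False is_path_Cons h by auto
      have lp: "last p = (c, d)" using Cons.prems False by simp
      have pt: "passage_time w (u # p) = edge_weight w (a,b) (a',b') + passage_time w p"
        using passage_time_Cons[OF False] Cons.prems h by simp
      consider (v) "a' = a" "\<bar>b' - b\<bar> = 1" | (r) "a' = a + 1" "b' = b" | (l) "a' = a - 1" "b' = b"
        using adj by (auto simp: adjacent_def abs_if split: if_splits)
      then show ?thesis
      proof cases
        case v
        then obtain rs where rs: "length rs = nat (c - a)" "cost w a b' rs d \<le> passage_time w p"
          using Cons.IH[OF pp h lp] Cons.prems by auto
        have "edge_weight w (a,b) (a',b') = 1" using v by (simp add: edge_weight_def)
        moreover have "cost w a b rs d \<le> of_int \<bar>b - b'\<bar> + cost w a b' rs d" by (rule cost_tri)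
        moreover have "\<bar>b - b'\<bar> = 1" using v by simp
        ultimately show ?thesis using rs pt by (intro exI[of _ rs]) simp
      next
        case r
        then obtain rs where rs: "length rs = nat (c - (a+1))" "cost w (a+1) b rs d \<le> passage_time w p"
          using Cons.IH[OF pp h lp] Cons.prems ca by auto
        have "edge_weight w (a,b) (a',b') = w a b" using r by (simp add: edge_weight_def)
        then show ?thesis using rs pt ca Cons.prems by (intro exI[of _ "b # rs"]) simp
      next
        case l
        then obtain rs' where rs: "length rs' = nat (c - (a-1))" "cost w (a-1) b rs' d \<le> passage_time w p"
          using Cons.IH[OF pp h lp] Cons.prems by auto
        then obtain r0 rs where rs': "rs' = r0 # rs" using Cons.prems by (cases rs') auto
        have ew: "edge_weight w (a,b) (a',b') \<ge> 0" using edge_weight_nonneg w0 by blast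
        have "cost w a b rs d \<le> of_int \<bar>b - r0\<bar> + cost w a r0 rs d" by (rule cost_tri)
        moreover have "w (a-1) r0 \<ge> 0" by (rule w0)
        moreover have "length rs = nat (c - a)" using rs rs' Cons.prems by simp
        ultimately show ?thesis using rs rs' pt ew by (intro exI[of _ rs]) (simp add: abs_minus_commute)
      qed
    qed
  qed
qed

definition tgt :: "int list \<Rightarrow> int \<Rightarrow> int" where
  "tgt rs d = (case rs of [] \<Rightarrow> d | r # _ \<Rightarrow> r)"

definition good :: "(int \<Rightarrow> int \<Rightarrow> real) \<Rightarrow> int \<Rightarrow> int \<Rightarrow> int list \<Rightarrow> int \<Rightarrow> point list \<Rightarrow> bool" where
  "good w a b rs d q \<longleftrightarrow> is_path q \<and> hd q = (a,b) \<and> last q = (a + int (length rs), d) \<and>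
     semi_directed q \<and> distinct q \<and> passage_time w q = cost w a b rs d \<and>
     (\<forall>z\<in>set q. a < fst z \<or> (fst z = a \<and> min b (tgt rs d) \<le> snd z \<and> snd z \<le> max b (tgt rs d)))"

lemma good_vert:
  assumes IH: "good w a b' rs d q'" and t: "tgt rs d \<noteq> b" and b': "b' = b + sgn (tgt rs d - b)"
  shows "good w a b rs d ((a,b) # q')"
proof -
  let ?t = "tgt rs d"
  have ne: "q' \<noteq> []" using IH by (auto simp: good_def is_path_def)
  have h: "hd q' = (a, b')" using IH by (simp add: good_def)
  have s: "\<bar>b' - b\<bar> = 1" using b' t by (auto simp: sgn_if)
  have adj: "adjacent (a,b) (a,b')" using s by (simp add: adjacent_def)
  have ew: "edge_weight w (a,b) (a,b') = 1" by (simp add: edge_weight_def)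
  have cst: "cost w a b rs d = 1 + cost w a b' rs d"
  proof (cases rs)
    case Nil then show ?thesis using b' t by (auto simp: tgt_def sgn_if)
  next
    case (Cons r rs0) then show ?thesis using b' t by (auto simp: tgt_def sgn_if)
  qed
  have range: "\<forall>z\<in>set q'. a < fst z \<or> (fst z = a \<and> min b' ?t \<le> snd z \<and> snd z \<le> max b' ?t)"
    using IH by (simp add: good_def)
  have range2: "\<forall>z\<in>set q'. a < fst z \<or> (fst z = a \<and> min b ?t \<le> snd z \<and> snd z \<le> max b ?t)"
  proof
    fix z assume z: "z \<in> set q'"
    show "a < fst z \<or> (fst z = a \<and> min b ?t \<le> snd z \<and> snd z \<le> max b ?t)"
    proof (cases "b < ?t")
      case True
      then have "b' = b + 1" using b' by (simp add: sgn_if)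
      then show ?thesis using range z True by fastforce
    next
      case False
      then have "b' = b - 1" using b' t by (simp add: sgn_if)
      then show ?thesis using range z False t by fastforce
    qed
  qed
  have notin: "(a,b) \<notin> set q'"
  proof
    assume "(a,b) \<in> set q'"
    then have "min b' ?t \<le> b \<and> b \<le> max b' ?t" using range by auto
    then show False using b' t by (cases "b < ?t") (auto simp: sgn_if)
  qed
  have sd: "(fst (hd q') - fst (a,b), snd (hd q') - snd (a,b)) \<in> {(1, 0), (0, 1), (0, -1)}"
    using h b' t by (auto simp: sgn_if)
  show ?thesis
    using IH ne h adj ew cst range2 notin sd
    unfolding good_def
    by (simp add: is_path_Cons semi_directed_Cons passage_time_Cons)
qed

lemma build: "\<exists>q. good w a b rs d q"
proof (induction rs arbitrary: a b)
  case Nil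
  have "\<forall>b. nat \<bar>d - b\<bar> = n \<longrightarrow> (\<exists>q. good w a b [] d q)" for n
  proof (induction n)
    case 0
    show ?case
    proof (intro allI impI)
      fix b assume "nat \<bar>d - b\<bar> = 0"
      then have "b = d" by simp
      then show "\<exists>q. good w a b [] d q"
        by (intro exI[of _ "[(a,b)]"])
          (simp add: good_def is_path_single semi_directed_single passage_time_single tgt_def)
    qed
  next
    case (Suc n)
    show ?case
    proof (intro allI impI)
      fix b assume nb: "nat \<bar>d - b\<bar> = Suc n"
      define b' where "b' = b + sgn (tgt [] d - b)"
      have "nat \<bar>d - b'\<bar> = n" using nb by (auto simp: b'_def tgt_def sgn_if)
      then obtain q' where "good w a b' [] d q'" using Suc.IH by blast
      moreover have "tgt [] d \<noteq> b" using nb by (auto simp: tgt_def)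
      ultimately show "\<exists>q. good w a b [] d q" using good_vert b'_def by blast
    qed
  qed
  then show ?case by blast
next
  case (Cons r rs)
  have "\<forall>b. nat \<bar>r - b\<bar> = n \<longrightarrow> (\<exists>q. good w a b (r # rs) d q)" for n
  proof (induction n)
    case 0
    show ?case
    proof (intro allI impI)
      fix b assume "nat \<bar>r - b\<bar> = 0"
      then have rb: "b = r" by simp
      obtain q' where g: "good w (a+1) r rs d q'" using Cons.IH by blast
      have ne: "q' \<noteq> []" using g by (auto simp: good_def is_path_def)
      have h: "hd q' = (a+1, r)" using g by (simp add: good_def)
      have adj: "adjacent (a,r) (a+1,r)" by (simp add: adjacent_def)
      have ew: "edge_weight w (a,r) (a+1,r) = w a r" by (simp add: edge_weight_def)
      have range: "\<forall>z\<in>set q'. a < fst z"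
        using g unfolding good_def by force
      have "good w a r (r # rs) d ((a,r) # q')"
        using g ne h adj ew range unfolding good_def
        by (auto simp: is_path_Cons semi_directed_Cons passage_time_Cons tgt_def)
      then show "\<exists>q. good w a b (r # rs) d q" using rb by blast
    qed
  next
    case (Suc n)
    show ?case
    proof (intro allI impI)
      fix b assume nb: "nat \<bar>r - b\<bar> = Suc n"
      define b' where "b' = b + sgn (tgt (r # rs) d - b)"
      have "nat \<bar>r - b'\<bar> = n" using nb by (auto simp: b'_def tgt_def sgn_if)
      then obtain q' where "good w a b' (r # rs) d q'" using Suc.IH by blast
      moreover have "tgt (r # rs) d \<noteq> b" using nb by (auto simp: tgt_def)
      ultimately show "\<exists>q. good w a b (r # rs) d q" using good_vert b'_def by blast
    qed
  qed
  then show ?case by blast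
qed

theorem proposition2p1:
  fixes w :: "int \<Rightarrow> int \<Rightarrow> real" and \<gamma> :: "point list" and x1 y1 x2 y2 :: int
  assumes "\<And>x y. w x y \<ge> 0"
    and "geodesic w \<gamma> (x1, y1) (x2, y2)"
    and "x2 \<ge> x1"
  shows "\<exists>\<gamma>'. geodesic w \<gamma>' (x1, y1) (x2, y2) \<and> semi_directed \<gamma>' \<and> non_self_intersecting \<gamma>'"
proof -
  have g: "path_from_to \<gamma> (x1, y1) (x2, y2)" "passage_time w \<gamma> = T w (x1, y1) (x2, y2)"
    using assms(2) by (auto simp: geodesic_def)
  obtain rs where rs: "length rs = nat (x2 - x1)" "cost w x1 y1 rs y2 \<le> passage_time w \<gamma>"
    using lower[where w=w, OF assms(1), of \<gamma> x1 y1 x2 y2] g assms(3) by (auto simp: path_from_to_def)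
  obtain q where q: "good w x1 y1 rs y2 q" using build by blast
  have pq: "path_from_to q (x1, y1) (x2, y2)"
    using q rs assms(3) by (simp add: good_def path_from_to_def)
  have le1: "passage_time w q \<le> T w (x1, y1) (x2, y2)"
    using q rs g by (simp add: good_def)
  have "T w (x1, y1) (x2, y2) \<le> passage_time w q"
    unfolding T_def
  proof (rule cInf_lower)
    show "passage_time w q \<in> {passage_time w p |p. path_from_to p (x1, y1) (x2, y2)}"
      using pq by blast
    show "bdd_below {passage_time w p |p. path_from_to p (x1, y1) (x2, y2)}"
      using passage_time_nonneg[where w=w, OF assms(1)] by (intro bdd_belowI[of _ 0]) blast
  qed
  then have "geodesic w q (x1, y1) (x2, y2)" using le1 pq by (simp add: geodesic_def)
  then show ?thesis using q by (auto simp: good_def non_self_intersecting_def)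
qed

end
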